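(* Let $G\le\mathrm{O}(d)$ be finite and $z_1,\ldots,z_n\in\mathbb{R}^d$. Put $$\alpha(\{z_i\}_{i=1}^n,G):=\inf_{x,y\in\mathcal{O}}\ \max_{f\in\mathcal{F}(x,y)}\Big(\sum_{w\in S(x,y)}\lambda_{\min}\Big(\sum_{i\in f^{-1}(w)}v_i(x)v_i(x)^\top\Big)\Big)^{1/2}.$$ Then the max filter bank $\Phi:\mathbb{R}^d/G\to\mathbb{R}^n$, $\Phi([x])=(\langle\!\langle[z_i],[x]\rangle\!\rangle)_{i=1}^n$, satisfies $$\inf_{\substack{[x],[y]\in\mathbb{R}^d/G\\ [x]\ne[y]}}\frac{\|\Phi([x])-\Phi([y])\|}{d([x],[y])}\ge\alpha(\{z_i\}_{i=1}^n,G).$$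
   Context: For $x\in\mathbb{R}^d$, $[x]:=\{gx:g\in G\}$; $d([x],[y]):=\min_{p\in[x],q\in[y]}\|p-q\|$ and $\langle\!\langle[x],[y]\rangle\!\rangle:=\max_{p\in[x],q\in[y]}\langle p,q\rangle$. The open Voronoi cell $V_x$ is the set of $y$ such that $x$ is the unique maximizer of $\langle p,y\rangle$ over $p\in[x]$; $Q_x:=\bigcup_{p\in[x]}V_p$. $P(G):=\{x:\mathrm{stab}_G(x)=\{\mathrm{id}\}\}$, and $\mathcal{O}:=P(G)\cap\bigcap_{i=1}^nQ_{z_i}$. For $x\in\mathcal{O}$, $v_i(x)$ is the unique element of $\arg\max_{p\in[z_i]}\langle p,x\rangle$. $S(x,y):=\{q\in[y]:V_q\cap V_x\ne\varnothing\}$, and $\mathcal{F}(x,y)$ is the (nonempty) set of functions $f:\{1,\ldots,n\}\to[y]$ with $f(i)\in S(x,y)\cap\arg\max_{q\in[y]}\langle q,v_i(x)\rangle$ for all $i$. An empty sum of matrices is the zero matrix; $\lambda_{\min}$ denotes the smallest eigenvalue. *)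

theory Defs
  imports "HOL-Analysis.Analysis" "HOL-Library.FuncSet"
begin

definition finite_orth_group :: "(real^'n^'n) set \<Rightarrow> bool" where
  "finite_orth_group G \<longleftrightarrow> finite G \<and> mat 1 \<in> G \<and>
     (\<forall>g\<in>G. orthogonal_matrix g) \<and>
     (\<forall>g\<in>G. \<forall>h\<in>G. g ** h \<in> G) \<and> (\<forall>g\<in>G. transpose g \<in> G)"

definition orb :: "(real^'n^'n) set \<Rightarrow> real^'n \<Rightarrow> (real^'n) set" where
  "orb G x = (\<lambda>g. g *v x) ` G"

definition dorb :: "(real^'n^'n) set \<Rightarrow> real^'n \<Rightarrow> real^'n \<Rightarrow> real" where
  "dorb G x y = Min {norm (p - q) | p q. p \<in> orb G x \<and> q \<in> orb G y}"

definition mf :: "(real^'n^'n) set \<Rightarrow> real^'n \<Rightarrow> real^'n \<Rightarrow> real" where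
  "mf G x y = Max {inner p q | p q. p \<in> orb G x \<and> q \<in> orb G y}"

definition vor :: "(real^'n^'n) set \<Rightarrow> real^'n \<Rightarrow> (real^'n) set" where
  "vor G x = {y. \<forall>p\<in>orb G x. p \<noteq> x \<longrightarrow> inner p y < inner x y}"

definition Qset :: "(real^'n^'n) set \<Rightarrow> real^'n \<Rightarrow> (real^'n) set" where
  "Qset G x = (\<Union>p\<in>orb G x. vor G p)"

definition Pset :: "(real^'n^'n) set \<Rightarrow> (real^'n) set" where
  "Pset G = {x. {g\<in>G. g *v x = x} = {mat 1}}"

definition Oset :: "(real^'n^'n) set \<Rightarrow> (nat \<Rightarrow> real^'n) \<Rightarrow> nat \<Rightarrow> (real^'n) set" where
  "Oset G z n = Pset G \<inter> (\<Inter>i\<in>{..<n}. Qset G (z i))"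

definition vv :: "(real^'n^'n) set \<Rightarrow> (nat \<Rightarrow> real^'n) \<Rightarrow> nat \<Rightarrow> real^'n \<Rightarrow> real^'n" where
  "vv G z i x = (THE p. p \<in> orb G (z i) \<and> (\<forall>q\<in>orb G (z i). q \<noteq> p \<longrightarrow> inner q x < inner p x))"

definition Sset :: "(real^'n^'n) set \<Rightarrow> real^'n \<Rightarrow> real^'n \<Rightarrow> (real^'n) set" where
  "Sset G x y = {q \<in> orb G y. vor G q \<inter> vor G x \<noteq> {}}"

definition argmax_orb :: "(real^'n^'n) set \<Rightarrow> real^'n \<Rightarrow> real^'n \<Rightarrow> (real^'n) set" where
  "argmax_orb G y v = {q \<in> orb G y. \<forall>q'\<in>orb G y. inner q' v \<le> inner q v}"

definition Fset :: "(real^'n^'n) set \<Rightarrow> (nat \<Rightarrow> real^'n) \<Rightarrow> nat \<Rightarrow> real^'n \<Rightarrow> real^'n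
    \<Rightarrow> (nat \<Rightarrow> real^'n) set" where
  "Fset G z n x y = (\<Pi>\<^sub>E i\<in>{..<n}. Sset G x y \<inter> argmax_orb G y (vv G z i x))"

definition outer :: "real^'n \<Rightarrow> real^'n^'n" where
  "outer v = (\<chi> i j. v $ i * v $ j)"

definition lambda_min :: "real^'n^'n \<Rightarrow> real" where
  "lambda_min M = Min {l. \<exists>v. v \<noteq> 0 \<and> M *v v = l *\<^sub>R v}"

definition alpha :: "(real^'n^'n) set \<Rightarrow> (nat \<Rightarrow> real^'n) \<Rightarrow> nat \<Rightarrow> real" where
  "alpha G z n = Inf {Max ((\<lambda>f. sqrt (\<Sum>w\<in>Sset G x y.
        lambda_min (\<Sum>i\<in>{i. i < n \<and> f i = w}. outer (vv G z i x)))) ` Fset G z n x y)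
      | x y. x \<in> Oset G z n \<and> y \<in> Oset G z n}"

definition Phi_dist :: "(real^'n^'n) set \<Rightarrow> (nat \<Rightarrow> real^'n) \<Rightarrow> nat \<Rightarrow> real^'n \<Rightarrow> real^'n \<Rightarrow> real" where
  "Phi_dist G z n x y = sqrt (\<Sum>i<n. (mf G (z i) x - mf G (z i) y)\<^sup>2)"

end

theory Submission
  imports Defs
begin


lemma inner_mat: "inner (A *v u) w = inner u (transpose A *v (w::real^'n))"
  by (metis dot_lmul_matrix inner_commute transpose_matrix_vector)

lemma orth_inner: "orthogonal_matrix (g::real^'n^'n) \<Longrightarrow> inner (g *v u) (g *v w) = inner u w"
  by (simp add: inner_mat matrix_vector_mul_assoc orthogonal_matrix)

lemma orth_norm: "orthogonal_matrix (g::real^'n^'n) \<Longrightarrow> norm (g *v u) = norm u"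
  by (simp add: norm_eq_sqrt_inner orth_inner)


definition eigs :: "real^'n^'n \<Rightarrow> real set" where
  "eigs M = {l. \<exists>v. v \<noteq> 0 \<and> M *v v = l *\<^sub>R v}"

lemma quad_zero:
  fixes c q :: real
  assumes "\<forall>t. 0 \<le> 2 * t * c + t^2 * q" "0 \<le> q"
  shows "c = 0"
proof (rule ccontr)
  assume c: "c \<noteq> 0"
  define t where "t = - c / (q + 1)"
  have q1: "q + 1 > 0" using assms by simp
  have "2 * t * c + t^2 * q = c^2 * (- 2 * (q+1) + q) / (q+1)^2"
    unfolding t_def using q1 by (simp add: divide_simps power2_eq_square) algebra
  also have "\<dots> < 0" using c q1 assms(2)
    by (intro divide_neg_pos mult_pos_neg) auto
  finally show False using assms(1) by (metis not_le)
qed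

lemma sym_eig:
  fixes M :: "real^'n^'n"
  assumes sym: "transpose M = M"
  shows "finite (eigs M) \<and> lambda_min M \<in> eigs M \<and> (\<forall>d. lambda_min M * (norm d)^2 \<le> inner d (M *v d))"
proof -
  define Q where "Q v = inner v (M *v v)" for v
  have symi: "inner (M *v u) w = inner u (M *v w)" for u w
    using inner_mat[of M u w] sym by simp
  have contQ: "continuous_on (sphere 0 1) Q" unfolding Q_def
    by (intro continuous_intros linear_continuous_on matrix_vector_mul_bounded_linear)
  obtain i :: 'n where True by simp
  have ne: "sphere (0::real^'n) 1 \<noteq> {}" using norm_axis_1[of i] by (metis mem_sphere_0 empty_iff)
  obtain u0 where u0: "u0 \<in> sphere 0 1" "\<forall>y\<in>sphere 0 1. Q u0 \<le> Q y"
    using continuous_attains_inf[OF compact_sphere ne contQ] by blast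
  define m where "m = Q u0"
  have Qs: "Q (c *\<^sub>R v) = c^2 * Q v" for c v
    unfolding Q_def by (simp add: matrix_vector_mult_scaleR power2_eq_square)
  have low: "m * (norm v)^2 \<le> Q v" for v
  proof (cases "v = 0")
    case True then show ?thesis by (simp add: Q_def)
  next
    case False
    define u where "u = (1 / norm v) *\<^sub>R v"
    have "u \<in> sphere 0 1" using False by (simp add: u_def)
    then have "m \<le> Q u" using u0 m_def by blast
    moreover have "v = norm v *\<^sub>R u" using False by (simp add: u_def)
    then have "Q v = (norm v)^2 * Q u" using Qs by metis
    ultimately show ?thesis by (metis mult.commute mult_right_mono zero_le_power2)
  qed
  have nu0: "norm u0 = 1" using u0 by simp
  define w where "w = M *v u0 - m *\<^sub>R u0"
  have "\<forall>t. 0 \<le> 2 * t * inner w w + t^2 * (Q w - m * (norm w)^2)"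
  proof
    fix t :: real
    have e1: "Q (u0 + t *\<^sub>R w) = Q u0 + 2 * t * inner (M *v u0) w + t^2 * Q w"
      unfolding Q_def using symi[of u0 w]
      by (simp add: algebra_simps inner_add_left inner_add_right power2_eq_square inner_commute)
    have e2: "(norm (u0 + t *\<^sub>R w))^2 = 1 + 2 * t * inner u0 w + t^2 * (norm w)^2"
    proof -
      have "(norm (u0 + t *\<^sub>R w))^2 = inner (u0 + t *\<^sub>R w) (u0 + t *\<^sub>R w)" by (simp add: power2_norm_eq_inner)
      also have "\<dots> = inner u0 u0 + 2 * t * inner u0 w + t^2 * inner w w"
        by (simp add: inner_add_left inner_add_right inner_commute power2_eq_square algebra_simps)
      finally show ?thesis using nu0 by (simp add: power2_norm_eq_inner[symmetric])
    qed
    have ww: "inner w w = inner (M *v u0) w - m * inner u0 w" unfolding w_def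
      by (simp add: inner_diff_left)
    have "0 \<le> Q (u0 + t *\<^sub>R w) - m * (norm (u0 + t *\<^sub>R w))^2" using low[of "u0 + t *\<^sub>R w"] by simp
    also have "\<dots> = 2 * t * inner w w + t^2 * (Q w - m * (norm w)^2)"
      unfolding e1 e2 ww by (simp add: m_def algebra_simps)
    finally show "0 \<le> 2 * t * inner w w + t^2 * (Q w - m * (norm w)^2)" .
  qed
  then have "inner w w = 0" by (rule quad_zero) (use low in simp)
  then have Mu0: "M *v u0 = m *\<^sub>R u0" unfolding w_def by simp
  have meig: "m \<in> eigs M" unfolding eigs_def using Mu0 nu0 by (auto intro!: exI[of _ u0])
  have eiglow: "m \<le> l" if "l \<in> eigs M" for l
  proof -
    from that obtain v where v: "v \<noteq> 0" "M *v v = l *\<^sub>R v" unfolding eigs_def by auto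
    have "Q v = l * (norm v)^2" unfolding Q_def using v by (simp add: power2_norm_eq_inner)
    then have "m * (norm v)^2 \<le> l * (norm v)^2" using low[of v] by simp
    then show ?thesis using v by simp
  qed
  define ev where "ev l = (SOME v. v \<noteq> 0 \<and> M *v v = l *\<^sub>R v)" for l
  have ev: "ev l \<noteq> 0 \<and> M *v ev l = l *\<^sub>R ev l" if "l \<in> eigs M" for l
  proof -
    have "\<exists>v. v \<noteq> 0 \<and> M *v v = l *\<^sub>R v" using that unfolding eigs_def by auto
    then show ?thesis unfolding ev_def by (rule someI_ex)
  qed
  have inj: "inj_on ev (eigs M)"
  proof (rule inj_onI)
    fix a b assume ab: "a \<in> eigs M" "b \<in> eigs M" "ev a = ev b"
    then have "a *\<^sub>R ev a = b *\<^sub>R ev a" using ev by metis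
    then show "a = b" using ev[OF ab(1)] by (simp add: scaleR_cancel_right)
  qed
  have "pairwise orthogonal (ev ` eigs M)"
  proof (clarsimp simp: pairwise_def orthogonal_def)
    fix a b assume ab: "a \<in> eigs M" "b \<in> eigs M" "ev a \<noteq> ev b"
    then have "a \<noteq> b" by auto
    have "a * inner (ev a) (ev b) = inner (M *v ev a) (ev b)" using ev[OF ab(1)] by simp
    also have "\<dots> = inner (ev a) (M *v ev b)" by (rule symi)
    also have "\<dots> = b * inner (ev a) (ev b)" using ev[OF ab(2)] by simp
    finally show "inner (ev a) (ev b) = 0" using \<open>a \<noteq> b\<close> by simp
  qed
  moreover have "0 \<notin> ev ` eigs M" using ev by auto
  ultimately have "independent (ev ` eigs M)" by (rule pairwise_orthogonal_independent)
  then have "finite (ev ` eigs M)" by (rule finiteI_independent)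
  then have fin: "finite (eigs M)" using inj finite_imageD by blast
  have lm: "lambda_min M = m" unfolding lambda_min_def eigs_def[symmetric]
    using fin meig eiglow by (intro Min_eqI) auto
  show ?thesis using fin meig lm low unfolding Q_def by auto
qed

lemma outer_mv: "outer v *v d = inner v d *\<^sub>R v"
  by (simp add: vec_eq_iff outer_def matrix_vector_mult_def inner_vec_def sum_distrib_left mult.commute mult.left_commute)

lemma sum_mv: "(sum f I) *v (d::real^'n) = sum (\<lambda>i. f i *v d) I"
proof (induction I rule: infinite_finite_induct)
  case (insert x F) then show ?case by (simp add: matrix_vector_mult_add_rdistrib)
qed auto

lemma outer_sum_sym: "transpose (\<Sum>i\<in>I. outer (v i)) = (\<Sum>i\<in>I. outer (v i :: real^'n))"
  by (simp add: vec_eq_iff transpose_def outer_def mult.commute)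

lemma outer_sum_quad: "inner d ((\<Sum>i\<in>I. outer (v i)) *v d) = (\<Sum>i\<in>I. (inner (v i) d)^2)"
  by (simp add: sum_mv outer_mv inner_sum_right power2_eq_square inner_commute)

lemma lmin_outer:
  fixes v :: "'a \<Rightarrow> real^'n"
  shows "0 \<le> lambda_min (\<Sum>i\<in>I. outer (v i)) \<and>
    (\<forall>d. lambda_min (\<Sum>i\<in>I. outer (v i)) * (norm d)^2 \<le> (\<Sum>i\<in>I. (inner (v i) d)^2))"
proof -
  let ?M = "\<Sum>i\<in>I. outer (v i)"
  have E: "finite (eigs ?M) \<and> lambda_min ?M \<in> eigs ?M \<and> (\<forall>d. lambda_min ?M * (norm d)^2 \<le> inner d (?M *v d))"
    by (rule sym_eig[OF outer_sum_sym])
  then obtain u where u: "u \<noteq> 0" "?M *v u = lambda_min ?M *\<^sub>R u" unfolding eigs_def by auto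
  have "lambda_min ?M * (norm u)^2 = inner u (?M *v u)" using u by (simp add: power2_norm_eq_inner)
  also have "\<dots> \<ge> 0" unfolding outer_sum_quad by (simp add: sum_nonneg)
  finally have "0 \<le> lambda_min ?M * (norm u)^2" .
  then have "0 \<le> lambda_min ?M" using u by (simp add: zero_le_mult_iff)
  then show ?thesis using E outer_sum_quad by metis
qed

lemma hyp_interior:
  fixes A :: "(real^'n) set"
  assumes "finite A" "0 \<notin> A"
  shows "interior (\<Union>a\<in>A. {u. inner a u = 0}) = {}"
  using assms
proof (induction A rule: finite_induct)
  case (insert a F)
  have "interior ((\<Union>b\<in>F. {u. inner b u = 0}) \<union> {u. inner a u = 0}) = interior (\<Union>b\<in>F. {u. inner b u = 0})"
    by (rule interior_closed_Un_empty_interior) (use insert in \<open>auto intro!: closed_Union closed_hyperplane\<close>)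
  then show ?case using insert by (simp add: Un_commute)
qed simp

lemma hyp_dense:
  fixes A :: "(real^'n) set"
  assumes "finite A" "0 \<notin> A" "open U" "U \<noteq> {}"
  shows "\<exists>u\<in>U. \<forall>a\<in>A. inner a u \<noteq> 0"
proof (rule ccontr)
  assume "\<not> ?thesis"
  then have "U \<subseteq> (\<Union>a\<in>A. {u. inner a u = 0})" by auto
  then have "U \<subseteq> interior (\<Union>a\<in>A. {u. inner a u = 0})" using assms(3) by (rule interior_maximal)
  then show False using hyp_interior[OF assms(1,2)] assms(4) by auto
qed

lemma finite_argmax:
  assumes "finite S" "S \<noteq> {}"
  shows "\<exists>p\<in>S. \<forall>q\<in>S. (f q :: real) \<le> f p"
proof -
  have "Max (f ` S) \<in> f ` S" using assms by simp
  then obtain p where p: "p \<in> S" "f p = Max (f ` S)" by auto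
  have "\<forall>q\<in>S. f q \<le> f p" using assms p by simp
  then show ?thesis using p by blast
qed

lemma open_halfs:
  fixes F :: "(real^'n) set"
  assumes "finite F"
  shows "open {u. \<forall>a\<in>F. 0 < inner a u}"
proof -
  have "{u. \<forall>a\<in>F. 0 < inner a u} = (\<Inter>a\<in>F. {u. inner a u > 0})" by auto
  then show ?thesis using assms by (simp add: open_INT open_halfspace_gt)
qed

lemma ev_pos:
  fixes a0 b :: real
  assumes "0 \<le> a0" "0 < a0 \<or> 0 < b"
  shows "eventually (\<lambda>e. 0 < a0 + e * b) (at_right 0)"
proof (cases "0 < a0")
  case True
  have "((\<lambda>e. a0 + e * b) \<longlongrightarrow> a0 + 0 * b) (at_right 0)"
    by (intro tendsto_intros)
  then show ?thesis using True by (simp add: order_tendstoD(1))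
next
  case False
  then have "a0 = 0" "0 < b" using assms by auto
  then have ab: "a0 = 0" "0 < b" by auto
  have "eventually (\<lambda>e. 0 < e) (at_right (0::real))" by (rule eventually_at_right_less)
  then show ?thesis by (rule eventually_mono) (simp add: ab)
qed

lemma diff_ne0: "(0::'a::ab_group_add) \<notin> (\<lambda>(q,q'). q - q') ` {(q,q'). q \<in> S \<and> q' \<in> S \<and> q \<noteq> q'}"
proof
  assume "0 \<in> (\<lambda>(q,q'). q - q') ` {(q,q'). q \<in> S \<and> q' \<in> S \<and> q \<noteq> q'}"
  then obtain pr where pr: "pr \<in> {(q,q'). q \<in> S \<and> q' \<in> S \<and> q \<noteq> q'}" "0 = (\<lambda>(q,q'). q - q') pr" by (rule imageE)
  obtain q q' where "pr = (q, q')" by (cases pr)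
  then show False using pr by simp
qed

lemma cont_Max:
  fixes f :: "'i \<Rightarrow> 'a::topological_space \<Rightarrow> real"
  assumes "finite I" "I \<noteq> {}" "\<forall>i\<in>I. continuous_on S (f i)"
  shows "continuous_on S (\<lambda>x. Max ((\<lambda>i. f i x) ` I))"
  using assms
proof (induction I rule: finite_ne_induct)
  case (singleton i) then show ?case by simp
next
  case (insert i I)
  have "(\<lambda>x. Max ((\<lambda>i. f i x) ` insert i I)) = (\<lambda>x. max (f i x) (Max ((\<lambda>i. f i x) ` I)))"
    using insert.hyps by (simp add: Max_insert)
  then show ?case using insert by (simp add: continuous_on_max)
qed

lemma cont_Min:
  fixes f :: "'i \<Rightarrow> 'a::topological_space \<Rightarrow> real"
  assumes "finite I" "I \<noteq> {}" "\<forall>i\<in>I. continuous_on S (f i)"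
  shows "continuous_on S (\<lambda>x. Min ((\<lambda>i. f i x) ` I))"
  using assms
proof (induction I rule: finite_ne_induct)
  case (singleton i) then show ?case by simp
next
  case (insert i I)
  have "(\<lambda>x. Min ((\<lambda>i. f i x) ` insert i I)) = (\<lambda>x. min (f i x) (Min ((\<lambda>i. f i x) ` I)))"
    using insert.hyps by (simp add: Min_insert)
  then show ?case using insert by (simp add: continuous_on_min)
qed

lemma cont_mv: "continuous_on S (\<lambda>x. (A::real^'n^'m) *v x)"
  by (intro linear_continuous_on matrix_vector_mul_bounded_linear)

context fixes G :: "(real^'n^'n) set" assumes fog: "finite_orth_group G"
begin
lemma G_orth: "g \<in> G \<Longrightarrow> orthogonal_matrix g" using fog by (auto simp: finite_orth_group_def)
lemma G_mul: "g \<in> G \<Longrightarrow> h \<in> G \<Longrightarrow> g ** h \<in> G" using fog by (auto simp: finite_orth_group_def)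
lemma G_tr: "g \<in> G \<Longrightarrow> transpose g \<in> G" using fog by (auto simp: finite_orth_group_def)
lemma G_1: "mat 1 \<in> G" using fog by (auto simp: finite_orth_group_def)
lemma G_fin: "finite G" using fog by (auto simp: finite_orth_group_def)
lemma G_inv: "g \<in> G \<Longrightarrow> transpose g ** g = mat 1"
  using G_orth orthogonal_matrix by blast
lemma G_inv': "g \<in> G \<Longrightarrow> g ** transpose g = mat 1"
  using G_orth orthogonal_matrix_def by blast

lemma orb_self: "x \<in> orb G x"
  unfolding orb_def using G_1 by (metis image_eqI matrix_vector_mul_lid)
lemma orb_fin: "finite (orb G x)" unfolding orb_def using G_fin by simp
lemma orb_act: "p \<in> orb G x \<Longrightarrow> g \<in> G \<Longrightarrow> g *v p \<in> orb G x"
  unfolding orb_def using G_mul by (auto simp: matrix_vector_mul_assoc)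
lemma orb_sub: "p \<in> orb G x \<Longrightarrow> orb G p \<subseteq> orb G x"
  using orb_act unfolding orb_def[of G p] by auto
lemma orb_eq: "p \<in> orb G x \<Longrightarrow> orb G p = orb G x"
proof
  assume p: "p \<in> orb G x"
  then show "orb G p \<subseteq> orb G x" by (rule orb_sub)
  from p obtain g where g: "g \<in> G" "p = g *v x" unfolding orb_def by auto
  then have "transpose g *v p = x" using G_inv by (simp add: matrix_vector_mul_assoc)
  moreover have "transpose g *v p \<in> orb G p" using orb_act[OF orb_self G_tr[OF g(1)]] .
  ultimately have "x \<in> orb G p" by simp
  then show "orb G x \<subseteq> orb G p" by (rule orb_sub)
qed
lemma orb_norm: "p \<in> orb G x \<Longrightarrow> norm p = norm x"
  unfolding orb_def using G_orth orth_norm by auto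
lemma orb_ne: "orb G x \<noteq> {}" using orb_self by auto

lemma mf_eq:
  assumes p: "p \<in> orb G z" and q: "q \<in> orb G y" and mx: "\<forall>p'\<in>orb G z. inner p' q \<le> inner p q"
  shows "mf G z y = inner p q"
  unfolding mf_def
proof (rule Max_eqI)
  have "{inner p q |p q. p \<in> orb G z \<and> q \<in> orb G y} = (\<lambda>(p,q). inner p q) ` (orb G z \<times> orb G y)"
    by auto
  then show "finite {inner p q |p q. p \<in> orb G z \<and> q \<in> orb G y}" using orb_fin by simp
  show "inner p q \<in> {inner p q |p q. p \<in> orb G z \<and> q \<in> orb G y}" using p q by auto
  fix t assume "t \<in> {inner p q |p q. p \<in> orb G z \<and> q \<in> orb G y}"
  then obtain p' q' where t: "t = inner p' q'" "p' \<in> orb G z" "q' \<in> orb G y" by auto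
  have "q' \<in> orb G q" using orb_eq[OF q] t by simp
  then obtain h where h: "h \<in> G" "q' = h *v q" unfolding orb_def by auto
  have "t = inner (transpose h *v p') q" using t h inner_mat[of h q p'] by (simp only: inner_commute)
  also have "\<dots> \<le> inner p q" using mx orb_act[OF t(2) G_tr[OF h(1)]] by blast
  finally show "t \<le> inner p q" .
qed

lemma mf_eq':
  assumes p: "p \<in> orb G z" and q: "q \<in> orb G y" and mx: "\<forall>q'\<in>orb G y. inner p q' \<le> inner p q"
  shows "mf G z y = inner p q"
proof (rule mf_eq[OF p q], rule ballI)
  fix p' assume "p' \<in> orb G z"
  then have "p' \<in> orb G p" using orb_eq[OF p] by simp
  then obtain g where g: "g \<in> G" "p' = g *v p" unfolding orb_def by auto
  have "inner p' q = inner p (transpose g *v q)" using g by (simp add: inner_mat)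
  also have "\<dots> \<le> inner p q" using mx orb_act[OF q G_tr[OF g(1)]] by blast
  finally show "inner p' q \<le> inner p q" .
qed

lemma vv_prop:
  assumes "x \<in> Qset G (z i)"
  shows "vv G z i x \<in> orb G (z i) \<and> (\<forall>q\<in>orb G (z i). q \<noteq> vv G z i x \<longrightarrow> inner q x < inner (vv G z i x) x)"
proof -
  from assms obtain p where p: "p \<in> orb G (z i)" "x \<in> vor G p" unfolding Qset_def by auto
  have P: "p \<in> orb G (z i) \<and> (\<forall>q\<in>orb G (z i). q \<noteq> p \<longrightarrow> inner q x < inner p x)"
    using p orb_eq[OF p(1)] unfolding vor_def by auto
  show ?thesis unfolding vv_def
  proof (rule theI2[where a = p])
    show "p \<in> orb G (z i) \<and> (\<forall>q\<in>orb G (z i). q \<noteq> p \<longrightarrow> inner q x < inner p x)" by (rule P)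
    fix p' assume "p' \<in> orb G (z i) \<and> (\<forall>q\<in>orb G (z i). q \<noteq> p' \<longrightarrow> inner q x < inner p' x)"
    then show "p' = p" using P by force
  qed auto
qed

lemma dorb_le: "w \<in> orb G y \<Longrightarrow> dorb G x y \<le> norm (x - w)"
proof -
  assume w: "w \<in> orb G y"
  have "{norm (p - q) |p q. p \<in> orb G x \<and> q \<in> orb G y} = (\<lambda>(p,q). norm (p - q)) ` (orb G x \<times> orb G y)"
    by auto
  then have "finite {norm (p - q) |p q. p \<in> orb G x \<and> q \<in> orb G y}" using orb_fin by simp
  moreover have "norm (x - w) \<in> {norm (p - q) |p q. p \<in> orb G x \<and> q \<in> orb G y}" using w orb_self by blast
  ultimately show ?thesis unfolding dorb_def by (rule Min_le)
qed

lemma dorb_nonneg: "0 \<le> dorb G x y"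
proof -
  have "{norm (p - q) |p q. p \<in> orb G x \<and> q \<in> orb G y} = (\<lambda>(p,q). norm (p - q)) ` (orb G x \<times> orb G y)"
    by auto
  then show ?thesis unfolding dorb_def using orb_fin orb_ne by (auto simp: Min_ge_iff)
qed


lemma mf_x:
  assumes "x \<in> Qset G (z i)"
  shows "mf G (z i) x = inner (vv G z i x) x"
proof -
  note V = vv_prop[of x z i, OF assms]
  show ?thesis
  proof (rule mf_eq)
    show "vv G z i x \<in> orb G (z i)" using V by blast
    show "x \<in> orb G x" by (rule orb_self)
    show "\<forall>p'\<in>orb G (z i). inner p' x \<le> inner (vv G z i x) x" using V by force
  qed
qed

lemma mf_y:
  assumes "x \<in> Qset G (z i)" and "q \<in> argmax_orb G y (vv G z i x)"
  shows "mf G (z i) y = inner (vv G z i x) q"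
proof (rule mf_eq')
  show "vv G z i x \<in> orb G (z i)" using vv_prop[of x z i, OF assms(1)] by blast
  show "q \<in> orb G y" using assms(2) unfolding argmax_orb_def by blast
  show "\<forall>q'\<in>orb G y. inner (vv G z i x) q' \<le> inner (vv G z i x) q"
    using assms(2) unfolding argmax_orb_def by (simp add: inner_commute)
qed

lemma Sset_fin: "finite (Sset G x y)"
  unfolding Sset_def using orb_fin by simp

lemma pointwise:
  assumes x: "\<forall>i<n. x \<in> Qset G (z i)" and f: "f \<in> Fset G z n x y"
  shows "sqrt (\<Sum>w\<in>Sset G x y. lambda_min (\<Sum>i\<in>{i. i < n \<and> f i = w}. outer (vv G z i x))) * dorb G x y
         \<le> Phi_dist G z n x y"
proof -
  define v where "v i = vv G z i x" for i
  define S where "S = Sset G x y"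
  define lm where "lm w = lambda_min (\<Sum>i\<in>{i. i < n \<and> f i = w}. outer (v i))" for w
  have fi: "f i \<in> S \<and> f i \<in> argmax_orb G y (v i)" if "i < n" for i
    using f that unfolding Fset_def S_def v_def by auto
  have diff: "mf G (z i) x - mf G (z i) y = inner (v i) (x - f i)" if "i < n" for i
    using mf_x[of x z i, OF x[rule_format, OF that]] mf_y[of x z i, OF x[rule_format, OF that]] fi[OF that]
    by (simp add: v_def inner_diff_right)
  have "(\<Sum>i<n. (mf G (z i) x - mf G (z i) y)^2) = (\<Sum>i<n. (inner (v i) (x - f i))^2)"
    using diff by simp
  also have "\<dots> = (\<Sum>w\<in>S. \<Sum>i\<in>{i. i \<in> {..<n} \<and> f i = w}. (inner (v i) (x - f i))^2)"
    by (rule sum.group[symmetric]) (use fi Sset_fin in \<open>auto simp: S_def\<close>)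
  also have "\<dots> = (\<Sum>w\<in>S. \<Sum>i\<in>{i. i < n \<and> f i = w}. (inner (v i) (x - w))^2)"
    by (intro sum.cong) auto
  also have "\<dots> \<ge> (\<Sum>w\<in>S. lm w * (dorb G x y)^2)"
  proof (rule sum_mono)
    fix w assume w: "w \<in> S"
    have wo: "w \<in> orb G y" using w unfolding S_def Sset_def by auto
    note L = lmin_outer[of v "{i. i < n \<and> f i = w}"]
    have "lm w * (dorb G x y)^2 \<le> lm w * (norm (x - w))^2"
      using L dorb_le[OF wo, of x] dorb_nonneg unfolding lm_def
      by (intro mult_left_mono power_mono) auto
    also have "\<dots> \<le> (\<Sum>i\<in>{i. i < n \<and> f i = w}. (inner (v i) (x - w))^2)"
      using L unfolding lm_def by blast
    finally show "lm w * (dorb G x y)^2 \<le> (\<Sum>i\<in>{i. i < n \<and> f i = w}. (inner (v i) (x - w))^2)" .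
  qed
  finally have "(\<Sum>w\<in>S. lm w) * (dorb G x y)^2 \<le> (\<Sum>i<n. (mf G (z i) x - mf G (z i) y)^2)"
    by (simp add: sum_distrib_right)
  then have "sqrt ((\<Sum>w\<in>S. lm w) * (dorb G x y)^2) \<le> Phi_dist G z n x y"
    unfolding Phi_dist_def by (rule real_sqrt_le_mono)
  then show ?thesis using dorb_nonneg
    by (simp add: real_sqrt_mult S_def lm_def v_def)
qed

lemma vor_of_generic:
  assumes "\<forall>q\<in>orb G y. \<forall>q'\<in>orb G y. q \<noteq> q' \<longrightarrow> inner (q - q') u \<noteq> 0"
  shows "\<exists>q\<in>orb G y. u \<in> vor G q \<and> (\<forall>q'\<in>orb G y. inner q' u \<le> inner q u)"
proof -
  obtain q where q: "q \<in> orb G y" "\<forall>q'\<in>orb G y. inner q' u \<le> inner q u"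
    using finite_argmax[where f="\<lambda>q. inner q u" and S="orb G y", OF orb_fin orb_ne] by blast
  have "u \<in> vor G q" unfolding vor_def orb_eq[OF q(1)]
  proof (clarify)
    fix p assume p: "p \<in> orb G y" "p \<noteq> q"
    then have "q \<noteq> p" by simp
    then have "inner (q - p) u \<noteq> 0" using assms q(1) p(1) by simp
    then have "inner p u \<noteq> inner q u" by (simp add: inner_diff_left)
    moreover have "inner p u \<le> inner q u" using q(2) p(1) by blast
    ultimately show "inner p u < inner q u" by linarith
  qed
  then show ?thesis using q by blast
qed

definition cvec :: "real^'n^'n \<Rightarrow> real^'n" where
  "cvec g = (g - mat 1) $ (SOME j. (g - mat 1) $ j \<noteq> 0)"

lemma cvec:
  assumes "g \<noteq> mat 1"
  shows "cvec g \<noteq> 0 \<and> (g *v u = u \<longrightarrow> inner (cvec g) u = 0)"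
proof -
  have "g - mat 1 \<noteq> 0" using assms by simp
  then have "\<exists>j. (g - mat 1) $ j \<noteq> 0" by (simp add: vec_eq_iff)
  then have j: "(g - mat 1) $ (SOME j. (g - mat 1) $ j \<noteq> 0) \<noteq> 0" by (rule someI_ex)
  have "g *v u = u \<Longrightarrow> (g - mat 1) *v u = 0"
    by (simp add: matrix_vector_mult_diff_rdistrib)
  moreover have "((g - mat 1) *v u) $ j = inner ((g - mat 1) $ j) u" for j
    by (rule matrix_vector_mul_component)
  ultimately have "g *v u = u \<Longrightarrow> inner ((g - mat 1) $ j) u = 0" for j
    by (metis zero_index)
  then show ?thesis using j unfolding cvec_def by blast
qed

lemma O_dense:
  assumes "open U" "U \<noteq> {}"
  shows "U \<inter> Oset G z n \<noteq> {}"
proof -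
  define D where "D i = (\<lambda>(q,q'). q - q') ` {(q,q'). q \<in> orb G (z i) \<and> q' \<in> orb G (z i) \<and> q \<noteq> q'}" for i
  define A where "A = cvec ` (G - {mat 1}) \<union> (\<Union>i\<in>{..<n}. D i)"
  have fD: "finite (D i)" for i
  proof -
    have "{(q,q'). q \<in> orb G (z i) \<and> q' \<in> orb G (z i) \<and> q \<noteq> q'} \<subseteq> orb G (z i) \<times> orb G (z i)" by auto
    then have "finite {(q,q'). q \<in> orb G (z i) \<and> q' \<in> orb G (z i) \<and> q \<noteq> q'}"
      using orb_fin finite_subset by blast
    then show ?thesis unfolding D_def by simp
  qed
  have fA: "finite A" unfolding A_def using G_fin fD by simp
  have nA: "0 \<notin> A"
  proof -
    have c0: "cvec g \<noteq> 0" if "g \<noteq> mat 1" for g using cvec[OF that] by (rule conjunct1)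
    have n1: "0 \<notin> cvec ` (G - {mat 1})"
    proof
      assume "0 \<in> cvec ` (G - {mat 1})"
      then obtain g where "g \<in> G - {mat 1}" "0 = cvec g" by (rule imageE)
      then show False using c0[of g] by simp
    qed
    have n2: "0 \<notin> D i" for i
    proof
      assume "0 \<in> D i"
      then show False using diff_ne0 unfolding D_def by blast
    qed
    show ?thesis unfolding A_def using n1 n2 by (simp only: Un_iff UN_iff) blast
  qed
  obtain u where u: "u \<in> U" "\<forall>a\<in>A. inner a u \<noteq> 0" using hyp_dense[OF fA nA assms] by blast
  have "u \<in> Pset G"
  proof -
    have "g = mat 1" if "g \<in> G" "g *v u = u" for g
    proof (rule ccontr)
      assume g1: "g \<noteq> mat 1"
      have "cvec g \<in> cvec ` (G - {mat 1})" using that(1) g1 by simp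
      then have "cvec g \<in> A" unfolding A_def by (rule UnI1)
      then have "inner (cvec g) u \<noteq> 0" using u(2) by simp
      moreover have "inner (cvec g) u = 0" using cvec[OF g1, of u] that(2) by simp
      ultimately show False by simp
    qed
    have "{g \<in> G. g *v u = u} = {mat 1}"
    proof
      show "{g \<in> G. g *v u = u} \<subseteq> {mat 1}" using \<open>\<And>g. g \<in> G \<Longrightarrow> g *v u = u \<Longrightarrow> g = mat 1\<close> by blast
      show "{mat 1} \<subseteq> {g \<in> G. g *v u = u}" using G_1 by simp
    qed
    then show ?thesis unfolding Pset_def by simp
  qed
  moreover have "u \<in> Qset G (z i)" if "i < n" for i
  proof -
    have "inner (q - q') u \<noteq> 0" if "q \<in> orb G (z i)" "q' \<in> orb G (z i)" "q \<noteq> q'" for q q'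
    proof -
      have "q - q' \<in> D i" unfolding D_def by (rule image_eqI[where x="(q,q')"]) (use that in auto)
      then have "q - q' \<in> A" unfolding A_def using \<open>i < n\<close> by (intro UnI2 UN_I[of i]) auto
      then show ?thesis using u(2) by simp
    qed
    then have H: "\<forall>q\<in>orb G (z i). \<forall>q'\<in>orb G (z i). q \<noteq> q' \<longrightarrow> inner (q - q') u \<noteq> 0" by blast
    obtain q where "q \<in> orb G (z i)" "u \<in> vor G q" using vor_of_generic[OF H] by blast
    then show ?thesis unfolding Qset_def by blast
  qed
  ultimately have "u \<in> Oset G z n" unfolding Oset_def by simp
  then show ?thesis using u(1) by blast
qed

lemma argmax_S:
  assumes p: "p \<in> orb G zz" "\<forall>q\<in>orb G zz. q \<noteq> p \<longrightarrow> inner q x < inner p x"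
  shows "Sset G x y \<inter> argmax_orb G y p \<noteq> {}"
proof -
  define A where "A = argmax_orb G y p"
  define N where "N = orb G y - A"
  have Asub: "A \<subseteq> orb G y" unfolding A_def argmax_orb_def by auto
  obtain q0 where q0: "q0 \<in> orb G y" "\<forall>q'\<in>orb G y. inner q' p \<le> inner q0 p"
    using finite_argmax[where f="\<lambda>q. inner q p" and S="orb G y", OF orb_fin orb_ne] by blast
  have q0A: "q0 \<in> A" unfolding A_def argmax_orb_def using q0 by simp
  define F1 where "F1 = (\<lambda>x'. x - x') ` (orb G x - {x})"
  define F2 where "F2 = (\<lambda>(q,q'). q' - q) ` (N \<times> A)"
  define F where "F = F1 \<union> F2"
  have finF: "finite F" unfolding F_def F1_def F2_def N_def using orb_fin Asub
    by (simp add: finite_subset)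
  have F1p: "0 \<le> inner a p \<and> (0 < inner a p \<or> 0 < inner a x)" if "a \<in> F1" for a
  proof -
    obtain x' where x': "x' \<in> orb G x" "x' \<noteq> x" "a = x - x'" using \<open>a \<in> F1\<close> unfolding F1_def by blast
    obtain g where g: "g \<in> G" "x' = g *v x" using x'(1) unfolding orb_def by blast
    have "inner x' p = inner (transpose g *v p) x" using g inner_mat[of g x p] by (simp add: inner_commute)
    also have "\<dots> \<le> inner p x"
    proof -
      have "transpose g *v p \<in> orb G zz" using orb_act[OF p(1) G_tr[OF g(1)]] .
      then show ?thesis using p(2) by (cases "transpose g *v p = p") auto
    qed
    finally have "inner p x' \<le> inner p x" by (simp add: inner_commute)
    then have 1: "0 \<le> inner a p" using x'(3) by (simp add: inner_diff_left inner_diff_right inner_commute[of _ p])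
    have nx: "norm x' = norm x" using orb_norm[OF x'(1)] .
    have "0 < (norm (x - x'))^2" using x'(2) by simp
    also have "(norm (x - x'))^2 = inner x x + inner x' x' - 2 * inner x' x"
      by (simp add: power2_norm_eq_inner inner_diff_left inner_diff_right inner_commute)
    also have "\<dots> = 2 * (inner x x - inner x' x)" using nx
      by (simp add: power2_norm_eq_inner[symmetric])
    finally have "0 < inner a x" using x'(3) by (simp add: inner_diff_left)
    then show ?thesis using 1 by simp
  qed
  have F2p: "0 < inner a p" if "a \<in> F2" for a
  proof -
    obtain pr where pr: "pr \<in> N \<times> A" "a = (\<lambda>(q,q'). q' - q) pr" using \<open>a \<in> F2\<close> unfolding F2_def by (rule imageE)
    obtain q q' where qq: "q \<in> N" "q' \<in> A" "a = q' - q" using pr by (cases pr) auto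
    have "q \<in> orb G y" "q \<notin> A" using qq(1) unfolding N_def by auto
    then obtain q'' where "q'' \<in> orb G y" "inner q p < inner q'' p"
      unfolding A_def argmax_orb_def by (auto simp: not_le)
    moreover have "inner q'' p \<le> inner q' p" using qq(2) \<open>q'' \<in> orb G y\<close> unfolding A_def argmax_orb_def by blast
    ultimately show ?thesis using qq(3) by (simp add: inner_diff_left)
  qed
  have "\<forall>a\<in>F. eventually (\<lambda>e. 0 < inner a p + e * inner a x) (at_right 0)"
  proof
    fix a assume "a \<in> F"
    then have "0 \<le> inner a p \<and> (0 < inner a p \<or> 0 < inner a x)"
      unfolding F_def using F1p F2p by (auto simp: less_imp_le)
    then show "eventually (\<lambda>e. 0 < inner a p + e * inner a x) (at_right 0)"
      using ev_pos by blast
  qed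
  then have ev: "eventually (\<lambda>e. \<forall>a\<in>F. 0 < inner a p + e * inner a x) (at_right (0::real))"
    by (rule eventually_ball_finite[OF finF])
  have "at_right (0::real) \<noteq> bot" using trivial_limit_at_right_real[of 0] by simp
  from eventually_happens'[OF this ev] obtain e where e: "\<forall>a\<in>F. 0 < inner a p + e * inner a x" ..
  define U where "U = {u. \<forall>a\<in>F. 0 < inner a u}"
  have "p + e *\<^sub>R x \<in> U" unfolding U_def using e by (simp add: inner_add_right)
  then have Une: "U \<noteq> {}" by blast
  have Uo: "open U" unfolding U_def using finF by (rule open_halfs)
  define D where "D = (\<lambda>(q,q'). q - q') ` {(q,q'). q \<in> orb G y \<and> q' \<in> orb G y \<and> q \<noteq> q'}"
  have fD: "finite D"
  proof -
    have "{(q,q'). q \<in> orb G y \<and> q' \<in> orb G y \<and> q \<noteq> q'} \<subseteq> orb G y \<times> orb G y" by auto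
    then have "finite {(q,q'). q \<in> orb G y \<and> q' \<in> orb G y \<and> q \<noteq> q'}"
      using orb_fin finite_subset by blast
    then show ?thesis unfolding D_def by simp
  qed
  have D0: "0 \<notin> D"
  proof
    assume "0 \<in> D"
    then show False using diff_ne0 unfolding D_def by blast
  qed
  obtain u where u: "u \<in> U" "\<forall>a\<in>D. inner a u \<noteq> 0" using hyp_dense[OF fD D0 Uo Une] by blast
  have H: "\<forall>q\<in>orb G y. \<forall>q'\<in>orb G y. q \<noteq> q' \<longrightarrow> inner (q - q') u \<noteq> 0"
  proof (intro ballI impI)
    fix q q' assume "q \<in> orb G y" "q' \<in> orb G y" "q \<noteq> q'"
    then have "q - q' \<in> D" unfolding D_def by auto
    then show "inner (q - q') u \<noteq> 0" using u(2) by blast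
  qed
  obtain q where q: "q \<in> orb G y" "u \<in> vor G q" "\<forall>q'\<in>orb G y. inner q' u \<le> inner q u"
    using vor_of_generic[OF H] by blast
  have qA: "q \<in> A"
  proof (rule ccontr)
    assume "q \<notin> A"
    then have "q \<in> N" using q(1) unfolding N_def by simp
    then have "q0 - q \<in> F" unfolding F_def F2_def using q0A by force
    then have "0 < inner (q0 - q) u" using u(1) unfolding U_def by blast
    moreover have "inner q0 u \<le> inner q u" using q(3) q0(1) by blast
    ultimately show False by (simp add: inner_diff_left)
  qed
  have "u \<in> vor G x" unfolding vor_def
  proof (clarify)
    fix x' assume "x' \<in> orb G x" "x' \<noteq> x"
    then have "x - x' \<in> F" unfolding F_def F1_def by blast
    then have "0 < inner (x - x') u" using u(1) unfolding U_def by blast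
    then show "inner x' u < inner x u" by (simp add: inner_diff_left)
  qed
  then have "q \<in> Sset G x y" unfolding Sset_def using q(1,2) by blast
  then show ?thesis using qA unfolding A_def by blast
qed

lemma Fset_ne:
  assumes "\<forall>i<n. x \<in> Qset G (z i)"
  shows "Fset G z n x y \<noteq> {}"
  unfolding Fset_def PiE_eq_empty_iff
proof
  assume "\<exists>i\<in>{..<n}. Sset G x y \<inter> argmax_orb G y (vv G z i x) = {}"
  then obtain i where i: "i < n" "Sset G x y \<inter> argmax_orb G y (vv G z i x) = {}" by auto
  note V = vv_prop[of x z i, OF assms[rule_format, OF i(1)]]
  have "Sset G x y \<inter> argmax_orb G y (vv G z i x) \<noteq> {}"
    by (rule argmax_S[of _ "z i"]) (use V in blast)+
  then show False using i(2) by simp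
qed

lemma Fset_fin: "finite (Fset G z n x y)"
proof -
  have "Fset G z n x y \<subseteq> (\<Pi>\<^sub>E i\<in>{..<n}. orb G y)"
    unfolding Fset_def Sset_def by (intro PiE_mono) auto
  moreover have "finite (\<Pi>\<^sub>E i\<in>{..<n}. orb G y)" by (intro finite_PiE orb_fin) simp
  ultimately show ?thesis by (rule finite_subset)
qed

lemma mf_alt: "mf G z x = Max ((\<lambda>gh. inner (fst gh *v z) (snd gh *v x)) ` (G \<times> G))"
proof -
  have "{inner p q |p q. p \<in> orb G z \<and> q \<in> orb G x} = (\<lambda>gh. inner (fst gh *v z) (snd gh *v x)) ` (G \<times> G)"
  proof
    show "{inner p q |p q. p \<in> orb G z \<and> q \<in> orb G x} \<subseteq> (\<lambda>gh. inner (fst gh *v z) (snd gh *v x)) ` (G \<times> G)"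
    proof
      fix t assume "t \<in> {inner p q |p q. p \<in> orb G z \<and> q \<in> orb G x}"
      then obtain p q where pq: "t = inner p q" "p \<in> orb G z" "q \<in> orb G x" by blast
      obtain g where g: "g \<in> G" "p = g *v z" using pq(2) unfolding orb_def by (rule imageE)
      obtain h where h: "h \<in> G" "q = h *v x" using pq(3) unfolding orb_def by (rule imageE)
      show "t \<in> (\<lambda>gh. inner (fst gh *v z) (snd gh *v x)) ` (G \<times> G)"
        using g h pq(1) by (intro image_eqI[where x="(g,h)"]) auto
    qed
    show "(\<lambda>gh. inner (fst gh *v z) (snd gh *v x)) ` (G \<times> G) \<subseteq> {inner p q |p q. p \<in> orb G z \<and> q \<in> orb G x}"
    proof
      fix t assume "t \<in> (\<lambda>gh. inner (fst gh *v z) (snd gh *v x)) ` (G \<times> G)"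
      then obtain gh where gh: "gh \<in> G \<times> G" "t = inner (fst gh *v z) (snd gh *v x)" by (rule imageE)
      have "fst gh *v z \<in> orb G z" "snd gh *v x \<in> orb G x" using gh(1) unfolding orb_def by auto
      then show "t \<in> {inner p q |p q. p \<in> orb G z \<and> q \<in> orb G x}" using gh(2) by blast
    qed
  qed
  then show ?thesis unfolding mf_def by simp
qed

lemma dorb_alt: "dorb G x y = Min ((\<lambda>gh. norm (fst gh *v x - snd gh *v y)) ` (G \<times> G))"
proof -
  have "{norm (p - q) |p q. p \<in> orb G x \<and> q \<in> orb G y} = (\<lambda>gh. norm (fst gh *v x - snd gh *v y)) ` (G \<times> G)"
  proof
    show "{norm (p - q) |p q. p \<in> orb G x \<and> q \<in> orb G y} \<subseteq> (\<lambda>gh. norm (fst gh *v x - snd gh *v y)) ` (G \<times> G)"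
    proof
      fix t assume "t \<in> {norm (p - q) |p q. p \<in> orb G x \<and> q \<in> orb G y}"
      then obtain p q where pq: "t = norm (p - q)" "p \<in> orb G x" "q \<in> orb G y" by blast
      obtain g where g: "g \<in> G" "p = g *v x" using pq(2) unfolding orb_def by (rule imageE)
      obtain h where h: "h \<in> G" "q = h *v y" using pq(3) unfolding orb_def by (rule imageE)
      show "t \<in> (\<lambda>gh. norm (fst gh *v x - snd gh *v y)) ` (G \<times> G)"
        using g h pq(1) by (intro image_eqI[where x="(g,h)"]) auto
    qed
    show "(\<lambda>gh. norm (fst gh *v x - snd gh *v y)) ` (G \<times> G) \<subseteq> {norm (p - q) |p q. p \<in> orb G x \<and> q \<in> orb G y}"
    proof
      fix t assume "t \<in> (\<lambda>gh. norm (fst gh *v x - snd gh *v y)) ` (G \<times> G)"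
      then obtain gh where gh: "gh \<in> G \<times> G" "t = norm (fst gh *v x - snd gh *v y)" by (rule imageE)
      have "fst gh *v x \<in> orb G x" "snd gh *v y \<in> orb G y" using gh(1) unfolding orb_def by auto
      then show "t \<in> {norm (p - q) |p q. p \<in> orb G x \<and> q \<in> orb G y}" using gh(2) by blast
    qed
  qed
  then show ?thesis unfolding dorb_def by simp
qed

lemma GG_ne: "G \<times> G \<noteq> {}" using G_1 by blast
lemma GG_fin: "finite (G \<times> G)" using G_fin by simp

lemma mf_cont: "continuous_on UNIV (\<lambda>x. mf G z x)"
  unfolding mf_alt
  by (rule cont_Max[OF GG_fin GG_ne, where f="\<lambda>gh x. inner (fst gh *v z) (snd gh *v x)"])
     (intro ballI continuous_intros cont_mv)

lemma dorb_cont1: "continuous_on UNIV (\<lambda>x. dorb G x y)"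
  unfolding dorb_alt
  by (rule cont_Min[OF GG_fin GG_ne, where f="\<lambda>gh x. norm (fst gh *v x - snd gh *v y)"])
     (intro ballI continuous_intros cont_mv)

lemma dorb_cont2: "continuous_on UNIV (\<lambda>y. dorb G x y)"
  unfolding dorb_alt
  by (rule cont_Min[OF GG_fin GG_ne, where f="\<lambda>gh y. norm (fst gh *v x - snd gh *v y)"])
     (intro ballI continuous_intros cont_mv)

lemma Phi_cont1: "continuous_on UNIV (\<lambda>x. Phi_dist G z n x y)"
  unfolding Phi_dist_def by (intro continuous_intros mf_cont)

lemma Phi_cont2: "continuous_on UNIV (\<lambda>y. Phi_dist G z n x y)"
  unfolding Phi_dist_def by (intro continuous_intros mf_cont)

lemma ext_dense:
  fixes h :: "real^'n \<Rightarrow> real"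
  assumes "continuous_on UNIV h" "\<forall>x\<in>Oset G z n. 0 \<le> h x"
  shows "0 \<le> h x0"
proof (rule ccontr)
  assume "\<not> 0 \<le> h x0"
  define U where "U = {x. h x < 0}"
  have "open U" unfolding U_def using assms(1) by (intro open_Collect_less continuous_intros) auto
  moreover have "x0 \<in> U" using \<open>\<not> 0 \<le> h x0\<close> unfolding U_def by simp
  then have "U \<noteq> {}" by blast
  ultimately have "U \<inter> Oset G z n \<noteq> {}" by (rule O_dense)
  then obtain u where "u \<in> U" "u \<in> Oset G z n" by blast
  then show False using assms(2) unfolding U_def by auto
qed

lemma O_Q: "x \<in> Oset G z n \<Longrightarrow> \<forall>i<n. x \<in> Qset G (z i)"
  unfolding Oset_def by simp

lemma step1:
  assumes x: "x \<in> Oset G z n" and y: "y \<in> Oset G z n"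
  shows "alpha G z n * dorb G x y \<le> Phi_dist G z n x y"
proof -
  define val where "val x y f = sqrt (\<Sum>w\<in>Sset G x y.
        lambda_min (\<Sum>i\<in>{i. i < n \<and> f i = w}. outer (vv G z i x)))" for x y f
  define T where "T = {Max ((\<lambda>f. val x y f) ` Fset G z n x y) | x y. x \<in> Oset G z n \<and> y \<in> Oset G z n}"
  have aT: "alpha G z n = Inf T" unfolding alpha_def T_def val_def by simp
  have mx: "Max ((\<lambda>f. val x y f) ` Fset G z n x y) \<in> (\<lambda>f. val x y f) ` Fset G z n x y"
    if "x \<in> Oset G z n" for x y
    using Fset_fin Fset_ne[OF O_Q[OF that]] by (intro Max_in) auto
  have "bdd_below T"
  proof (rule bdd_belowI)
    fix t assume "t \<in> T"
    then obtain x y where t: "t = Max ((\<lambda>f. val x y f) ` Fset G z n x y)" "x \<in> Oset G z n" by (auto simp: T_def)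
    from mx[OF t(2), of y] obtain f where "t = val x y f" unfolding t(1) by (rule imageE)
    moreover have "0 \<le> (\<Sum>w\<in>Sset G x y. lambda_min (\<Sum>i\<in>{i. i < n \<and> f i = w}. outer (vv G z i x)))"
    proof (rule sum_nonneg)
      fix w
      show "0 \<le> lambda_min (\<Sum>i\<in>{i. i < n \<and> f i = w}. outer (vv G z i x))"
        using lmin_outer[of "\<lambda>i. vv G z i x" "{i. i < n \<and> f i = w}"] by blast
    qed
    ultimately show "0 \<le> t" unfolding val_def by simp
  qed
  moreover have "Max ((\<lambda>f. val x y f) ` Fset G z n x y) \<in> T" unfolding T_def using x y by blast
  ultimately have "alpha G z n \<le> Max ((\<lambda>f. val x y f) ` Fset G z n x y)" unfolding aT by (meson cInf_lower)
  moreover obtain f where f: "f \<in> Fset G z n x y" "Max ((\<lambda>f. val x y f) ` Fset G z n x y) = val x y f"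
    using mx[OF x, of y] by (metis imageE)
  ultimately have "alpha G z n \<le> val x y f" by simp
  then have "alpha G z n * dorb G x y \<le> val x y f * dorb G x y" using dorb_nonneg by (rule mult_right_mono)
  also have "\<dots> \<le> Phi_dist G z n x y" unfolding val_def by (rule pointwise[OF O_Q[OF x] f(1)])
  finally show ?thesis .
qed

lemma step2: "alpha G z n * dorb G x y \<le> Phi_dist G z n x y"
proof -
  have A: "alpha G z n * dorb G x y \<le> Phi_dist G z n x y" if "y \<in> Oset G z n" for x y
  proof -
    have "0 \<le> Phi_dist G z n x y - alpha G z n * dorb G x y"
      by (rule ext_dense[where h="\<lambda>x. Phi_dist G z n x y - alpha G z n * dorb G x y"])
         (use step1 that in \<open>auto intro!: continuous_intros Phi_cont1 dorb_cont1\<close>)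
    then show ?thesis by simp
  qed
  have "0 \<le> Phi_dist G z n x y - alpha G z n * dorb G x y"
    by (rule ext_dense[where h="\<lambda>y. Phi_dist G z n x y - alpha G z n * dorb G x y"])
       (use A in \<open>auto intro!: continuous_intros Phi_cont2 dorb_cont2\<close>)
  then show ?thesis by simp
qed

lemma dorb_pos:
  assumes "orb G x \<noteq> orb G y"
  shows "0 < dorb G x y"
proof -
  have "{norm (p - q) |p q. p \<in> orb G x \<and> q \<in> orb G y} = (\<lambda>(p,q). norm (p - q)) ` (orb G x \<times> orb G y)"
    by auto
  then have fin: "finite {norm (p - q) |p q. p \<in> orb G x \<and> q \<in> orb G y}" using orb_fin by simp
  have ne: "{norm (p - q) |p q. p \<in> orb G x \<and> q \<in> orb G y} \<noteq> {}" using orb_self by blast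
  have "dorb G x y \<in> {norm (p - q) |p q. p \<in> orb G x \<and> q \<in> orb G y}"
    unfolding dorb_def using fin ne by (rule Min_in)
  then obtain p q where pq: "dorb G x y = norm (p - q)" "p \<in> orb G x" "q \<in> orb G y" by blast
  have "p \<noteq> q"
  proof
    assume "p = q"
    then have "orb G x = orb G y" using orb_eq[OF pq(2)] orb_eq[OF pq(3)] by simp
    then show False using assms by simp
  qed
  then show ?thesis using pq(1) by simp
qed

lemma main:
  "Inf {Phi_dist G z n x y / dorb G x y | x y. orb G x \<noteq> orb G y} \<ge> alpha G z n"
proof (rule cInf_greatest)
  obtain i :: 'n where True by simp
  have "axis i (1::real) \<notin> orb G 0" unfolding orb_def by (auto simp: axis_eq_0_iff)
  then have "orb G 0 \<noteq> orb G (axis i 1)" using orb_self[of "axis i 1"] by blast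
  then show "{Phi_dist G z n x y / dorb G x y | x y. orb G x \<noteq> orb G y} \<noteq> {}" by blast
  fix t assume "t \<in> {Phi_dist G z n x y / dorb G x y | x y. orb G x \<noteq> orb G y}"
  then obtain x y where t: "t = Phi_dist G z n x y / dorb G x y" "orb G x \<noteq> orb G y" by blast
  have "0 < dorb G x y" by (rule dorb_pos[OF t(2)])
  then show "alpha G z n \<le> t" unfolding t(1) using step2 by (simp add: pos_le_divide_eq)
qed

end

theorem theorem26:
  fixes G :: "(real^'n^'n) set" and z :: "nat \<Rightarrow> real^'n" and n :: nat
  assumes "finite_orth_group G"
  shows "Inf {Phi_dist G z n x y / dorb G x y | x y. orb G x \<noteq> orb G y} \<ge> alpha G z n"
  by (rule main[OF assms])

end
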